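(* Let $n\ge 3$ and let $c=(c_1,\dots,c_n)\in\{-1,+1\}^n$ be such that the cyclic sequence $(c_1,\dots,c_n,-c_1,\dots,-c_n)$ of length $2n$ contains no $n-1$ cyclically consecutive equal entries. For real angles $\varphi_2,\dots,\varphi_n$ let $C(\varphi)$ be the real $2\times(n-1)$ matrix with columns indexed by $j=2,\dots,n$ and entries \[ C_{1j}=(c_j-c_{j-1})\sin\varphi_j,\qquad C_{2j}=(c_{j-1}-c_j)\cos\varphi_j . \] If $0<\varphi_2<\varphi_3<\dots<\varphi_n<\pi$, then $C(\varphi)$ has rank two.
   Context: $C(\varphi)$ is the Jacobian with respect to $(\varphi_2,\dots,\varphi_n)$ of the constraint functions $g_1(\varphi)=\sum_{j=2}^n (c_{j-1}-c_j)\cos\varphi_j-(c_1+c_n)$ and $g_2(\varphi)=\sum_{j=2}^n (c_{j-1}-c_j)\sin\varphi_j$. The hypothesis on $c$ expresses that $c$ is a code of a polygon (at most $n-2$ cyclically consecutive equal signs in the extended sequence of length $2n$). *)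

theory Defs
  imports "HOL-Analysis.Analysis" "Jordan_Normal_Form.DL_Rank"
begin

definition ext_seq :: "nat \<Rightarrow> (nat \<Rightarrow> int) \<Rightarrow> nat \<Rightarrow> int" where
  "ext_seq n c k = (if k < n then c (k + 1) else - c (k - n + 1))"

definition no_cyclic_run :: "nat \<Rightarrow> (nat \<Rightarrow> int) \<Rightarrow> nat \<Rightarrow> bool" where
  "no_cyclic_run n c m \<longleftrightarrow>
     \<not> (\<exists>i < 2 * n. \<forall>t < m. ext_seq n c ((i + t) mod (2 * n)) = ext_seq n c i)"

text \<open>The 2 x (n-1) matrix C(phi); column k (0-based) corresponds to j = k + 2.\<close>
definition C_mat :: "nat \<Rightarrow> (nat \<Rightarrow> int) \<Rightarrow> (nat \<Rightarrow> real) \<Rightarrow> real mat" where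
  "C_mat n c \<phi> = mat 2 (n - 1) (\<lambda>(i, k).
     (let j = k + 2 in
      if i = 0 then real_of_int (c j - c (j - 1)) * sin (\<phi> j)
      else real_of_int (c (j - 1) - c j) * cos (\<phi> j)))"

end

theory Submission
  imports Defs "Jordan_Normal_Form.DL_Rank_Submatrix"
begin
lemma det2: assumes "(A::real mat) \<in> carrier_mat 2 2"
  shows "det A = A$$(0,0)*A$$(1,1) - A$$(0,1)*A$$(1,0)"
proof -
  have "det A = (\<Sum>j<2. A $$ (0,j) * cofactor A 0 j)" by (rule laplace_expansion_row[OF assms]) simp
  also have "\<dots> = A $$ (0,0) * cofactor A 0 0 + A $$ (0,1) * cofactor A 0 1"
    by (simp add: numeral_2_eq_2)
  also have "cofactor A 0 0 = A$$(1,1)" unfolding cofactor_def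
    using assms by (subst det_single) (auto simp: mat_delete_def)
  also have "cofactor A 0 1 = - A$$(1,0)" unfolding cofactor_def
    using assms by (subst det_single) (auto simp: mat_delete_def)
  finally show ?thesis by simp
qed

lemma rank_le2: assumes "(A::real mat) \<in> carrier_mat 2 nc" shows "vec_space.rank 2 A \<le> 2"
proof -
  interpret vec_space "TYPE(real)" 2 .
  have s: "VectorSpace.subspace class_ring (span (set (cols A))) V" 
    using span_is_subspace cols_dim assms by (metis carrier_matD(1))
  show ?thesis unfolding rank_def
    using subspace_dim[OF s fin_dim] fin_dim_span_cols[OF assms] dim_is_n by simp
qed

lemma rank_ge2:
  assumes A: "(A::real mat) \<in> carrier_mat 2 nc" and ab: "a < b" "b < nc"
    and d: "A$$(0,a)*A$$(1,b) - A$$(0,b)*A$$(1,a) \<noteq> 0"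
  shows "2 \<le> vec_space.rank 2 A"
proof -
  let ?S = "submatrix A UNIV {a,b}"
  have r: "{i. i < 2 \<and> i \<in> (UNIV::nat set)} = {0,1}" by auto
  have cr: "card {i. i < dim_row A \<and> i \<in> (UNIV::nat set)} = 2" using A r by simp
  have ccs: "{j. j < dim_col A \<and> j \<in> {a,b}} = {a,b}" using A ab by auto
  have cc: "card {j. j < dim_col A \<and> j \<in> {a,b}} = 2" unfolding ccs using ab by simp
  have S1: "dim_row ?S = 2" by (simp only: dim_submatrix cr)
  have S2: "dim_col ?S = 2" by (simp only: dim_submatrix cc)
  have S: "?S \<in> carrier_mat 2 2" using S1 S2 by (rule carrier_matI)
  have ca: "card {x\<in>{a,b}. x < a} = 0" using ab by auto
  have cbs: "{x\<in>{a,b}. x < b} = {a}" using ab by auto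
  have cb: "card {x\<in>{a,b}. x < b} = 1" unfolding cbs by simp
  have ci: "\<And>i::nat. card {x\<in>UNIV. x < i} = i" by simp
  have e: "\<And>i j. i < 2 \<Longrightarrow> j \<in> {a,b} \<Longrightarrow> ?S $$ (card {x\<in>UNIV. x < i}, card {x\<in>{a,b}. x < j}) = A $$ (i,j)"
    by (rule submatrix_index_card) (use A ab in auto)
  have "?S$$(0,0) = A$$(0,a)" using e[of 0 a, unfolded ca ci] by simp
  moreover have "?S$$(1,1) = A$$(1,b)" using e[of 1 b, unfolded cb ci] by simp
  moreover have "?S$$(0,1) = A$$(0,b)" using e[of 0 b, unfolded cb ci] by simp
  moreover have "?S$$(1,0) = A$$(1,a)" using e[of 1 a, unfolded ca ci] by simp
  ultimately have "det ?S \<noteq> 0" using det2[OF S] d by simp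
  from vec_space.rank_gt_minor[OF A this] cc A show ?thesis by simp
qed

lemma const_seg:
  assumes "\<forall>k. p \<le> k \<and> k < q \<longrightarrow> c (Suc k) = c k" "p \<le> k" "k \<le> q"
  shows "c k = (c p :: int)"
  using assms(2,3)
proof (induction k rule: dec_induct)
  case base then show ?case by simp
next
  case (step k) then show ?case using assms(1) by auto
qed

lemma two_changes:
  assumes n: "n \<ge> 3" and pm: "\<forall>j \<in> {1..n}. c j = 1 \<or> c j = -1"
    and nr: "no_cyclic_run n c (n - 1)"
  shows "\<exists>a b. 2 \<le> a \<and> a < b \<and> b \<le> n \<and> c a \<noteq> c (a-1) \<and> c b \<noteq> c (b-1)"
proof (rule ccontr)
  assume H: "\<not> ?thesis"
  show False
  proof (cases "\<exists>j\<in>{2..n}. c j \<noteq> c (j-1)")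
    case False
    have "\<forall>k. 1 \<le> k \<and> k < n \<longrightarrow> c (Suc k) = c k"
    proof (intro allI impI)
      fix k assume k: "1 \<le> k \<and> k < n"
      then have "Suc k \<in> {2..n}" by auto
      then show "c (Suc k) = c k" using False by auto
    qed
    then have cst: "\<And>k. 1 \<le> k \<Longrightarrow> k \<le> n \<Longrightarrow> c k = c 1" using const_seg by blast
    have "\<forall>t < n - 1. ext_seq n c ((0 + t) mod (2 * n)) = ext_seq n c 0"
    proof (intro allI impI)
      fix t assume t: "t < n - 1"
      then have "(0 + t) mod (2*n) = t" by simp
      then show "ext_seq n c ((0 + t) mod (2 * n)) = ext_seq n c 0"
        using t n cst[of "t+1"] by (simp add: ext_seq_def)
    qed
    moreover have "0 < 2 * n" using n by simp
    ultimately have "\<exists>i < 2 * n. \<forall>t < n - 1. ext_seq n c ((i + t) mod (2 * n)) = ext_seq n c i"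
      by blast
    with nr show False unfolding no_cyclic_run_def by blast
  next
    case True
    then obtain j where j: "2 \<le> j" "j \<le> n" "c j \<noteq> c (j-1)" by auto
    have oth: "\<And>k. 2 \<le> k \<Longrightarrow> k \<le> n \<Longrightarrow> k \<noteq> j \<Longrightarrow> c k = c (k-1)"
    proof (rule ccontr)
      fix k assume k: "2 \<le> k" "k \<le> n" "k \<noteq> j" "c k \<noteq> c (k-1)"
      show False
      proof (cases "k < j")
        case True then show False using H k j by blast
      next
        case False then show False using H k j by (metis linorder_neqE_nat)
      qed
    qed
    have "\<forall>k. 1 \<le> k \<and> k < j - 1 \<longrightarrow> c (Suc k) = c k"
    proof (intro allI impI)
      fix k assume k: "1 \<le> k \<and> k < j - 1"
      then have "2 \<le> Suc k" "Suc k \<le> n" "Suc k \<noteq> j" using j by auto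
      from oth[OF this] show "c (Suc k) = c k" by simp
    qed
    then have c1: "\<And>k. 1 \<le> k \<Longrightarrow> k \<le> j - 1 \<Longrightarrow> c k = c 1" using const_seg by blast
    have "\<forall>k. j \<le> k \<and> k < n \<longrightarrow> c (Suc k) = c k"
    proof (intro allI impI)
      fix k assume k: "j \<le> k \<and> k < n"
      then have "2 \<le> Suc k" "Suc k \<le> n" "Suc k \<noteq> j" using j by auto
      from oth[OF this] show "c (Suc k) = c k" by simp
    qed
    then have c2: "\<And>k. j \<le> k \<Longrightarrow> k \<le> n \<Longrightarrow> c k = c j" using const_seg by blast
    have cj: "c j = - c 1"
    proof -
      have "c (j-1) = c 1" using c1[of "j-1"] j by simp
      moreover have "j - 1 \<in> {1..n}" "j \<in> {1..n}" using j by auto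
      then have "c j = 1 \<or> c j = -1" "c (j-1) = 1 \<or> c (j-1) = -1" using pm by blast+
      ultimately show ?thesis using j(3) by auto
    qed
    have "\<forall>t < n - 1. ext_seq n c ((j - 1 + t) mod (2 * n)) = ext_seq n c (j - 1)"
    proof (intro allI impI)
      fix t assume t: "t < n - 1"
      then have md: "(j - 1 + t) mod (2*n) = j - 1 + t" using j by simp
      have jj: "j - 1 < n" "j - 1 + 1 = j" using j by auto
      have e0: "ext_seq n c (j-1) = c j" unfolding ext_seq_def using jj by (simp only: if_True)
      show "ext_seq n c ((j - 1 + t) mod (2 * n)) = ext_seq n c (j - 1)"
      proof (cases "j - 1 + t < n")
        case True
        then show ?thesis using md e0 c2[of "j + t"] j by (simp add: ext_seq_def)
      next
        case False
        moreover have "j - 1 + t - n + 1 = j + t - n" using False j by auto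
        ultimately have "ext_seq n c (j - 1 + t) = - c (j + t - n)" by (simp only: ext_seq_def if_False)
        moreover have "c (j + t - n) = c 1" using c1[of "j+t-n"] False t j by simp
        ultimately show ?thesis using md e0 cj by simp
      qed
    qed
    moreover have "j - 1 < 2 * n" using j by simp
    ultimately have "\<exists>i < 2 * n. \<forall>t < n - 1. ext_seq n c ((i + t) mod (2 * n)) = ext_seq n c i"
      by blast
    with nr show False unfolding no_cyclic_run_def by blast
  qed
qed

lemma phi_mono:
  fixes \<phi> :: "nat \<Rightarrow> real"
  assumes "\<forall>j \<in> {2..<n}. \<phi> j < \<phi> (j + 1)" "2 \<le> i" "i < j" "j \<le> n"
  shows "\<phi> i < \<phi> j"
  using assms(3,4)
proof (induction j rule: less_induct)
  case (less j)
  then obtain m where m: "j = Suc m" by (cases j) auto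
  show ?case
  proof (cases "i = m")
    case True then show ?thesis using assms m less by auto
  next
    case False
    then have "\<phi> i < \<phi> m" using less m by auto
    also have "\<phi> m < \<phi> j" using assms(1) m less assms(2) False by auto
    finally show ?thesis .
  qed
qed

theorem lemma2:
  fixes n :: nat and c :: "nat \<Rightarrow> int" and \<phi> :: "nat \<Rightarrow> real"
  assumes "n \<ge> 3"
    and "\<forall>j \<in> {1..n}. c j = 1 \<or> c j = -1"
    and "no_cyclic_run n c (n - 1)"
    and "0 < \<phi> 2"
    and "\<forall>j \<in> {2..<n}. \<phi> j < \<phi> (j + 1)"
    and "\<phi> n < pi"
  shows "vec_space.rank 2 (C_mat n c \<phi>) = 2"
proof -
  have A: "C_mat n c \<phi> \<in> carrier_mat 2 (n - 1)" by (simp add: C_mat_def)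
  obtain a b where ab: "2 \<le> a" "a < b" "b \<le> n" "c a \<noteq> c (a-1)" "c b \<noteq> c (b-1)"
    using two_changes[OF assms(1-3)] by blast
  have pa: "0 < \<phi> a" using ab assms(4) phi_mono[OF assms(5), of 2 a]
    by (cases "a = 2") auto
  have pb: "\<phi> b < pi" using ab assms(6) phi_mono[OF assms(5), of b n]
    by (cases "b = n") auto
  have pab: "\<phi> a < \<phi> b" using phi_mono[OF assms(5)] ab by auto
  have s: "sin (\<phi> b - \<phi> a) > 0" using pa pb pab by (intro sin_gt_zero) auto
  define da where "da = real_of_int (c a - c (a-1))"
  define db where "db = real_of_int (c b - c (b-1))"
  have da: "da \<noteq> 0" using ab unfolding da_def by simp
  have db: "db \<noteq> 0" using ab unfolding db_def by simp
  let ?A = "C_mat n c \<phi>"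
  have ia: "a - 2 < n - 1" "b - 2 < n - 1" using ab by auto
  have a2: "Suc (Suc (a - 2)) = a" "Suc (a - 2) = a - 1" "Suc (Suc (b - 2)) = b" "Suc (b - 2) = b - 1"
    using ab by auto
  have e1: "?A$$(0,a-2) = da * sin (\<phi> a)" "?A$$(1,a-2) = - da * cos (\<phi> a)"
    using ia ab unfolding C_mat_def da_def by (auto simp: Let_def a2 algebra_simps)
  have e2: "?A$$(0,b-2) = db * sin (\<phi> b)" "?A$$(1,b-2) = - db * cos (\<phi> b)"
    using ia ab unfolding C_mat_def db_def by (auto simp: Let_def a2 algebra_simps)
  have "?A$$(0,a-2)*?A$$(1,b-2) - ?A$$(0,b-2)*?A$$(1,a-2) = da * db * sin (\<phi> b - \<phi> a)"
    unfolding e1 e2 sin_diff by (simp add: algebra_simps)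
  also have "\<dots> \<noteq> 0" using da db s by simp
  finally have dd: "?A$$(0,a-2)*?A$$(1,b-2) - ?A$$(0,b-2)*?A$$(1,a-2) \<noteq> 0" .
  have "a - 2 < b - 2" using ab by auto
  then have "2 \<le> vec_space.rank 2 ?A" using ia(2) dd by (rule rank_ge2[OF A])
  with rank_le2[OF A] show ?thesis by simp
qed
end
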